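(* Let $p>3$ be a prime. Then for each $k=1,2,\ldots,(p-1)/2$, $$\sum_{j=0}^{p-2k}\binom{-k}{k+j}\frac{(-1)^{k+j}}{\binom{k+j}{k}}\equiv\frac{3k}{2}\sum_{j=1}^k\frac{\binom{2j}{j}}{j}-\frac32\binom{2k}{k}\pmod p.$$
   Context: For an integer $x$ and $n\in\mathbb{N}$, $\binom{x}{n}=x(x-1)\cdots(x-n+1)/n!$ (so $\binom{-k}{n}=(-1)^n\binom{k+n-1}{n}$). Congruences between rational numbers are understood in the ring of rationals whose denominators are coprime to $p$. *)

theory Defs
  imports Complex_Main "HOL-Computational_Algebra.Primes"
begin

definition rat_cong :: "rat \<Rightarrow> rat \<Rightarrow> nat \<Rightarrow> bool" where
  "rat_cong a b p \<longleftrightarrow>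
     (\<exists>m n :: int. \<not> int p dvd n \<and> a - b = of_int (int p * m) / of_int n)"

end

theory Submission imports Defs "HOL-Number_Theory.Residues" begin

definition pint :: "nat \<Rightarrow> rat \<Rightarrow> bool" where
  "pint p x \<longleftrightarrow> (\<exists>m n::int. \<not> int p dvd n \<and> x = of_int m / of_int n)"

definition rc :: "nat \<Rightarrow> rat \<Rightarrow> rat \<Rightarrow> bool" where
  "rc p a b \<longleftrightarrow> pint p ((a - b) / of_nat p)"

lemma pint_int: "prime p \<Longrightarrow> pint p (of_int m)"
  unfolding pint_def
  by (rule exI[of _ m], rule exI[of _ 1]) (auto simp: prime_gt_1_nat)

lemma pint_0: "prime p \<Longrightarrow> pint p 0"
  using pint_int[of p 0] by simp

lemma pint_nat: "prime p \<Longrightarrow> pint p (of_nat m)"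
  using pint_int[of p "int m"] by simp

lemma pint_fact: "prime p \<Longrightarrow> pint p (fact m)"
  using pint_nat[of p "fact m"] by simp

lemma pint_add: assumes "prime p" "pint p x" "pint p y" shows "pint p (x + y)"
proof -
  obtain a b where ab: "\<not> int p dvd b" "x = of_int a / of_int b" using assms(2) pint_def by auto
  obtain c d where cd: "\<not> int p dvd d" "y = of_int c / of_int d" using assms(3) pint_def by auto
  have pr: "prime (int p)" using assms(1) by simp
  have nd: "\<not> int p dvd b * d" using ab cd pr by (simp add: prime_dvd_mult_iff)
  have "b \<noteq> 0" "d \<noteq> 0" using ab cd by auto
  then have "x + y = of_int (a*d + c*b) / of_int (b*d)" using ab cd by (simp add: field_simps)
  then show ?thesis using nd unfolding pint_def by blast
qed

lemma pint_mult: assumes "prime p" "pint p x" "pint p y" shows "pint p (x * y)"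
proof -
  obtain a b where ab: "\<not> int p dvd b" "x = of_int a / of_int b" using assms(2) pint_def by auto
  obtain c d where cd: "\<not> int p dvd d" "y = of_int c / of_int d" using assms(3) pint_def by auto
  have pr: "prime (int p)" using assms(1) by simp
  have nd: "\<not> int p dvd b * d" using ab cd pr by (simp add: prime_dvd_mult_iff)
  have "x * y = of_int (a*c) / of_int (b*d)" using ab cd by simp
  then show ?thesis using nd unfolding pint_def by blast
qed

lemma pint_uminus: assumes "prime p" "pint p x" shows "pint p (- x)"
  using pint_mult[OF assms(1) pint_int[OF assms(1), of "-1"] assms(2)] by simp

lemma pint_diff: assumes "prime p" "pint p x" "pint p y" shows "pint p (x - y)"
  using pint_add[OF assms(1,2) pint_uminus[OF assms(1,3)]] by simp

lemma pint_sum: assumes "prime p" "\<And>i. i \<in> A \<Longrightarrow> pint p (f i)" shows "pint p (sum f A)"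
  using assms(2)
proof (induction A rule: infinite_finite_induct)
  case (infinite A) then show ?case using pint_0[OF assms(1)] by simp
next
  case empty then show ?case using pint_0[OF assms(1)] by simp
next
  case (insert x F) then show ?case using pint_add[OF assms(1)] by simp
qed

lemma pint_inv_int: assumes "\<not> int p dvd c" shows "pint p (1 / of_int c)"
  unfolding pint_def using assms by (intro exI[of _ 1] exI[of _ c]) auto

lemma pint_inv_nat: assumes "\<not> p dvd c" shows "pint p (1 / of_nat c)"
  using pint_inv_int[of p "int c"] assms by simp

lemma pint_inv_small: assumes "0 < c" "c < p" shows "pint p (1 / of_nat c)"
proof -
  have "\<not> p dvd c" using assms by (auto dest: dvd_imp_le)
  then show ?thesis by (rule pint_inv_nat)
qed

lemma pint_inv_fact: assumes "prime p" "m < p" shows "pint p (1 / fact m)"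
  using pint_inv_nat[of p "fact m"] assms prime_dvd_fact_iff[OF assms(1)] by simp

lemma pint_divide: assumes "prime p" "pint p x" "pint p (1/y)" shows "pint p (x / y)"
  using pint_mult[OF assms] by simp

lemma rc_refl: "prime p \<Longrightarrow> rc p a a"
  unfolding rc_def using pint_0 by simp

lemma rc_sym: assumes "prime p" "rc p a b" shows "rc p b a"
proof -
  have "(b - a) / of_nat p = - ((a - b) / of_nat p)" by (metis minus_diff_eq minus_divide_left)
  then show ?thesis using assms pint_uminus unfolding rc_def by metis
qed

lemma rc_add: assumes "prime p" "rc p a b" "rc p c d" shows "rc p (a + c) (b + d)"
proof -
  have "(a + c - (b + d)) / of_nat p = (a - b) / of_nat p + (c - d) / of_nat p" by (simp add: diff_divide_distrib add_divide_distrib)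
  then show ?thesis using assms pint_add unfolding rc_def by metis
qed

lemma rc_trans: assumes "prime p" "rc p a b" "rc p b c" shows "rc p a c"
  using rc_add[OF assms] unfolding rc_def by simp

lemma rc_neg: assumes "prime p" "rc p a b" shows "rc p (- a) (- b)"
proof -
  have "(- a - - b) / of_nat p = - ((a - b) / of_nat p)" by (metis minus_diff_eq minus_divide_left minus_diff_minus)
  then show ?thesis using assms pint_uminus unfolding rc_def by metis
qed

lemma rc_diff: assumes "prime p" "rc p a b" "rc p c d" shows "rc p (a - c) (b - d)"
  using rc_add[OF assms(1,2) rc_neg[OF assms(1,3)]] by simp

lemma rc_sum: assumes "prime p" "\<And>i. i \<in> A \<Longrightarrow> rc p (f i) (g i)" shows "rc p (sum f A) (sum g A)"
  using assms(2)
proof (induction A rule: infinite_finite_induct)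
  case (infinite A) then show ?case using rc_refl[OF assms(1)] by simp
next
  case empty then show ?case using rc_refl[OF assms(1)] by simp
next
  case (insert x F) then show ?case using rc_add[OF assms(1)] by simp
qed

lemma rc_mult_left: assumes "prime p" "pint p c" "rc p a b" shows "rc p (c * a) (c * b)"
proof -
  have "(c * a - c * b) / of_nat p = c * ((a - b) / of_nat p)" by (simp add: field_simps)
  then show ?thesis using assms pint_mult unfolding rc_def by metis
qed

lemma rc_mult: assumes "prime p" "rc p a b" "rc p c d" "pint p a" "pint p d"
  shows "rc p (a * c) (b * d)"
proof -
  have "rc p (a * c) (a * d)" using rc_mult_left[OF assms(1,4,3)] .
  moreover have "rc p (d * a) (d * b)" using rc_mult_left[OF assms(1,5,2)] .
  ultimately show ?thesis using rc_trans[OF assms(1)] by (simp add: mult.commute)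
qed

lemma rc_cancel: assumes "prime p" "rc p (c * a) (c * b)" "pint p (1 / c)" "c \<noteq> 0"
  shows "rc p a b"
  using rc_mult_left[OF assms(1,3,2)] assms(4) by simp

lemma rc_frac: assumes "prime p" "rc p (A * D) (C * B)" "pint p (1 / B)" "pint p (1 / D)"
  "B \<noteq> 0" "D \<noteq> 0"
  shows "rc p (A / B) (C / D)"
proof -
  have "pint p (1 / (B * D))" using pint_mult[OF assms(1,3,4)] by simp
  from rc_mult_left[OF assms(1) this assms(2)]
  show ?thesis using assms(5,6) by (simp add: field_simps)
qed

lemma rc_p: assumes "prime p" "pint p x" shows "rc p (of_nat p * x) 0"
  unfolding rc_def using assms prime_gt_0_nat[OF assms(1)] by simp

lemma rc_int: assumes "prime p" "[a = b] (mod int p)" shows "rc p (of_int a) (of_int b)"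
proof -
  obtain m where "a - b = int p * m" using assms(2) by (metis cong_iff_dvd_diff dvd_def cong_sym_eq)
  then have "(of_int a - of_int b) / of_nat p = (of_int m :: rat)"
    using prime_gt_0_nat[OF assms(1)] by (simp add: field_simps)
  then show ?thesis unfolding rc_def using pint_int[OF assms(1)] by simp
qed

lemma rat_cong_rc: assumes "prime p" shows "rat_cong a b p \<longleftrightarrow> rc p a b"
proof -
  have p0: "(of_nat p :: rat) \<noteq> 0" using prime_gt_0_nat[OF assms] by simp
  have "(a - b = of_int (int p * m) / of_int n) \<longleftrightarrow> ((a - b) / of_nat p = of_int m / of_int n)" for m n :: int
    using p0 by (auto simp: field_simps)
  then show ?thesis unfolding rat_cong_def rc_def pint_def by simp
qed

lemma wilson_gen: assumes "prime p" "m \<le> p - 1"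
  shows "rc p (fact (p - 1 - m) * fact m) ((-1) ^ (m + 1))"
  using assms(2)
proof (induction m)
  case 0
  have "rc p (of_int (fact (p - 1))) (of_int (-1))" using rc_int[OF assms(1) wilson_theorem[OF assms(1)]] .
  then show ?case by simp
next
  case (Suc m)
  have IH: "rc p (fact (p - 1 - m) * fact m) ((-1) ^ (m + 1))" using Suc by simp
  have e1: "(fact (p - 1 - m) :: rat) = of_nat (p - 1 - m) * fact (p - 1 - Suc m)"
    using Suc.prems by (metis Suc_diff_Suc diff_Suc_eq_diff_pred fact_Suc le_imp_less_Suc less_imp_le_nat zero_less_diff Suc_le_lessD of_nat_fact)
  have e2: "of_nat (p - 1 - m) = (of_nat p - of_nat (Suc m) :: rat)" using Suc.prems by (simp add: of_nat_diff)
  let ?X = "fact (p - 1 - Suc m) * fact (Suc m) :: rat"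
  have e3: "(fact (Suc m)::rat) = of_nat (Suc m) * fact m" by simp
  have "fact (p - 1 - m) * fact m * of_nat (Suc m) = ((of_nat p - of_nat (Suc m)) :: rat) * fact (p - 1 - Suc m) * fact (Suc m)"
    by (subst e1, subst e3, subst e2) (simp only: mult_ac)
  also have "\<dots> = of_nat p * (fact (p - 1 - Suc m) * fact (Suc m)) - of_nat (Suc m) * ?X"
    by (simp add: algebra_simps)
  finally have eq: "of_nat (Suc m) * ?X = of_nat p * (fact (p - 1 - Suc m) * fact (Suc m)) - fact (p - 1 - m) * fact m * of_nat (Suc m)"
    by simp
  have A: "rc p (of_nat p * (fact (p - 1 - Suc m) * fact (Suc m))) 0"
    using rc_p[OF assms(1)] pint_mult[OF assms(1) pint_fact[OF assms(1)] pint_fact[OF assms(1)]] by blast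
  have B: "rc p (fact (p - 1 - m) * fact m * of_nat (Suc m)) ((-1) ^ (m + 1) * of_nat (Suc m))"
    using rc_mult_left[OF assms(1) pint_nat[OF assms(1)] IH, of "Suc m"] by (simp add: mult.commute)
  have R: "rc p (of_nat (Suc m) * ?X) (0 - (-1) ^ (m + 1) * of_nat (Suc m))"
    unfolding eq by (rule rc_diff[OF assms(1) A B])
  have eqr: "(0::rat) - (-1) ^ (m + 1) * of_nat (Suc m) = of_nat (Suc m) * (-1) ^ (Suc m + 1)"
    by (simp add: algebra_simps)
  from R have "rc p (of_nat (Suc m) * ?X) (of_nat (Suc m) * (-1) ^ (Suc m + 1))" by (simp only: eqr)
  note RR = this
  have "Suc m < p" using Suc.prems prime_gt_1_nat[OF assms(1)] by linarith
  then have nd: "\<not> p dvd Suc m" by (auto dest: dvd_imp_le)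
  have "(of_nat (Suc m) :: rat) \<noteq> 0" by simp
  from rc_cancel[OF assms(1) RR pint_inv_nat[OF nd] this]
  show ?case by simp
qed

lemma pint_pm1: "prime p \<Longrightarrow> pint p ((-1) ^ j)"
  using pint_int[of p "(-1)^j"] by simp

lemma wilson_sq: assumes "prime p" "m \<le> p - 1"
  shows "rc p ((fact (p - 1 - m) * fact m)^2) 1"
proof -
  have P: "pint p (fact (p - 1 - m) * fact m)" using pint_mult[OF assms(1) pint_fact[OF assms(1)] pint_fact[OF assms(1)]] .
  have "rc p ((fact (p - 1 - m) * fact m) * (fact (p - 1 - m) * fact m)) ((-1) ^ (m + 1) * (-1) ^ (m + 1))"
    using rc_mult[OF assms(1) wilson_gen[OF assms] wilson_gen[OF assms] P pint_pm1[OF assms(1)]] .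
  moreover have "((-1::rat) ^ (m + 1) * (-1) ^ (m + 1)) = 1"
    by (simp flip: power_mult_distrib)
  ultimately show ?thesis by (simp add: power2_eq_square)
qed

definition u :: "nat \<Rightarrow> nat \<Rightarrow> rat" where
  "u k n = fact (n + k - 1) * fact (n - k) / fact n ^ 2"
definition v :: "nat \<Rightarrow> nat \<Rightarrow> rat" where
  "v k n = fact (n - 1) ^ 2 / (fact (n - k) * fact (n + k - 1))"
definition w :: "nat \<Rightarrow> nat \<Rightarrow> rat" where
  "w k n = fact n ^ 2 / (fact (n - k) * fact (n + k))"

lemma reflect: assumes "prime p" "1 \<le> k" "k \<le> n" "n + k \<le> p"
  shows "rc p (u k (p - n)) (- v k n)"
proof -
  have pr: "prime p" by fact
  have e1: "p - n + k - 1 = p - 1 - (n - k)" "p - n - k = p - 1 - (n + k - 1)" "p - n = p - 1 - (n - 1)"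
    using assms by auto
  have W1: "rc p (fact (p - 1 - (n - k)) * fact (n - k)) ((-1) ^ (n - k + 1))"
    by (rule wilson_gen[OF pr]) (use assms in simp)
  have W2: "rc p (fact (p - 1 - (n + k - 1)) * fact (n + k - 1)) ((-1) ^ (n + k - 1 + 1))"
    by (rule wilson_gen[OF pr]) (use assms in simp)
  have W3: "rc p ((fact (p - 1 - (n - 1)) * fact (n - 1))^2) 1"
    by (rule wilson_sq[OF pr]) (use assms in simp)
  have "rc p ((fact (p - 1 - (n - k)) * fact (n - k)) * (fact (p - 1 - (n + k - 1)) * fact (n + k - 1)))
     ((-1) ^ (n - k + 1) * (-1) ^ (n + k - 1 + 1))"
    by (rule rc_mult[OF pr W1 W2 pint_mult[OF pr pint_fact[OF pr] pint_fact[OF pr]] pint_pm1[OF pr]])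
  moreover have "((-1::rat) ^ (n - k + 1) * (-1) ^ (n + k - 1 + 1)) = -1"
  proof -
    have "n - k + 1 + (n + k - 1 + 1) = Suc (2 * n)" using assms by auto
    then show ?thesis by (simp add: power_add[symmetric] power_mult)
  qed
  ultimately have L: "rc p ((fact (p - 1 - (n - k)) * fact (p - 1 - (n + k - 1))) * (fact (n - k) * fact (n + k - 1))) (-1)"
    by (simp add: mult_ac)
  have R: "rc p (- (fact (n - 1) ^ 2) * fact (p - 1 - (n - 1)) ^ 2) (-1)"
    using rc_neg[OF pr W3] by (simp add: power_mult_distrib mult_ac)
  have "rc p ((fact (p - 1 - (n - k)) * fact (p - 1 - (n + k - 1))) * (fact (n - k) * fact (n + k - 1)))
     (- (fact (n - 1) ^ 2) * fact (p - 1 - (n - 1)) ^ 2)"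
    using rc_trans[OF pr L rc_sym[OF pr R]] .
  then have "rc p ((fact (p - 1 - (n - k)) * fact (p - 1 - (n + k - 1))) / fact (p - 1 - (n - 1)) ^ 2)
     (- (fact (n - 1) ^ 2) / (fact (n - k) * fact (n + k - 1)))"
    apply (rule rc_frac[OF pr])
    using pint_mult[OF pr pint_inv_fact[OF pr] pint_inv_fact[OF pr]] assms
      pint_mult[OF pr pint_inv_fact[OF pr] pint_inv_fact[OF pr], of "p - 1 - (n - 1)" "p - 1 - (n - 1)"]
    by (auto simp: power2_eq_square)
  moreover have "u k (p - n) = (fact (p - 1 - (n - k)) * fact (p - 1 - (n + k - 1))) / fact (p - 1 - (n - 1)) ^ 2"
    unfolding u_def by (subst e1(1), subst e1(2), subst e1(3), rule refl)
  ultimately show ?thesis unfolding v_def by simp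
qed

lemma tele_alg:
  fixes X A B K :: rat
  assumes "A \<noteq> 0" "B \<noteq> 0" "K \<noteq> 0" "B = A + 2 * K"
  shows "X / B - X / A = - (2 / K) * (X * (A + K) ^ 2 / (A * B) - X)"
proof -
  have e: "(A + K) ^ 2 = A * B + K ^ 2" using assms(4) by (simp add: power2_eq_square algebra_simps)
  have e1: "X * (A + K) ^ 2 / (A * B) - X = X * K ^ 2 / (A * B)"
    unfolding e using assms(1,2) by (simp add: field_simps)
  have e2: "X / B - X / A = X * (A - B) / (A * B)"
    using assms(1,2) by (simp add: field_simps)
  show ?thesis unfolding e1 e2 using assms(3) by (simp add: assms(4) power2_eq_square field_simps)
qed

lemma tele_term: assumes "1 \<le> k" "k + 1 \<le> n"
  shows "v (k + 1) n - v k n = - (2 / of_nat k) * (w k n - w k (n - 1))"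
proof -
  define a where "a = n - k - 1"
  have n: "n = a + k + 1" using assms unfolding a_def by simp
  have f1: "fact (a + 2 * k + 1) = (of_nat (a + 2 * k + 1) :: rat) * fact (a + 2 * k)"
    using fact_Suc[of "a + 2 * k", where 'a=rat] by simp
  have f2: "fact (a + 1) = (of_nat (a + 1) :: rat) * fact a"
    using fact_Suc[of "a", where 'a=rat] by simp
  have f3: "fact (a + k + 1) = (of_nat (a + k + 1) :: rat) * fact (a + k)"
    using fact_Suc[of "a + k", where 'a=rat] by simp
  have i1: "n - 1 = a + k" "n - (k + 1) = a" "n + (k + 1) - 1 = a + 2 * k + 1" "n - k = a + 1"
    "n + k - 1 = a + 2 * k" "n + k = a + 2 * k + 1" "a + k - k = a" "a + k + k = a + 2 * k"
    using n assms by auto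
  define X where "X = (fact (a + k) ^ 2 / (fact a * fact (a + 2 * k)) :: rat)"
  define A where "A = (of_nat (a + 1) :: rat)"
  define B where "B = (of_nat (a + 2 * k + 1) :: rat)"
  define K where "K = (of_nat k :: rat)"
  have fa: "(fact a :: rat) \<noteq> 0" "(fact (a + 2 * k) :: rat) \<noteq> 0" by auto
  have ABK: "A \<noteq> 0" "B \<noteq> 0" "K \<noteq> 0" "B = A + 2 * K" "of_nat (a + k + 1) = A + K"
    unfolding A_def B_def K_def using assms by auto
  have p1: "v (k + 1) n = X / B"
    unfolding v_def i1 f1 X_def B_def[symmetric] by (simp add: field_simps)
  have p2: "v k n = X / A"
    unfolding v_def i1 f2 X_def A_def[symmetric] by (simp add: field_simps)
  have fn: "fact n = (A + K) * fact (a + k)" using n f3 ABK(5) by simp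
  have p3: "w k n = X * (A + K) ^ 2 / (A * B)"
    unfolding w_def fn i1(4) i1(6) f1 f2 X_def A_def[symmetric] B_def[symmetric]
    by (simp add: power_mult_distrib mult_ac)
  have p4: "w k (n - 1) = X"
    unfolding w_def i1 X_def by simp
  show ?thesis unfolding p1 p2 p3 p4 K_def[symmetric] by (rule tele_alg[OF ABK(1-4)])
qed

lemma vk_alg: fixes F G K :: rat assumes "K \<noteq> 0"
  shows "F ^ 2 / G = 2 / K * ((K * F) ^ 2 / ((2 * K) * G))"
  using assms by (cases "G = 0") (simp_all add: field_simps power2_eq_square)

definition M :: "nat \<Rightarrow> nat \<Rightarrow> rat" where
  "M p k = (\<Sum>n=k..p-k. v k n)"

lemma M_step: assumes "1 \<le> k" "2 * k + 2 \<le> p"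
  shows "M p (k + 1) = M p k - (2 / of_nat k) * w k (p - k - 1) - v k (p - k)"
proof -
  define N where "N = p - k - 1"
  have N: "p - k = Suc N" "p - (k + 1) = N" "k + 1 \<le> N" using assms unfolding N_def by auto
  have s1: "M p k = v k k + (\<Sum>n=k+1..N. v k n) + v k (Suc N)"
  proof -
    have "M p k = (\<Sum>n=k..N. v k n) + v k (Suc N)"
      unfolding M_def N(1) using N(3) by (simp add: sum.cl_ivl_Suc)
    also have "(\<Sum>n=k..N. v k n) = v k k + (\<Sum>n=k+1..N. v k n)"
      using N(3) by (subst sum.atLeast_Suc_atMost) auto
    finally show ?thesis .
  qed
  have s2: "M p (k + 1) = (\<Sum>n=k+1..N. v (k + 1) n)"
    unfolding M_def N(2) by simp
  also have "\<dots> = (\<Sum>n=k+1..N. v k n - (2 / of_nat k) * (w k n - w k (n - 1)))"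
    by (rule sum.cong) (use tele_term[OF assms(1)] in \<open>auto simp: algebra_simps\<close>)
  also have "\<dots> = (\<Sum>n=k+1..N. v k n) - (2 / of_nat k) * (\<Sum>n=k+1..N. (w k n - w k (n - 1)))"
    using sum_subtractf[of "\<lambda>n. v k n" "\<lambda>n. (2 / of_nat k) * (w k n - w k (n - 1))" "{k+1..N}"]
      sum_distrib_left[of "2 / of_nat k" "\<lambda>n. w k n - w k (n - 1)" "{k+1..N}"]
    by simp
  also have "(\<Sum>n=k+1..N. (w k n - w k (n - 1))) = (\<Sum>i=k..N-1. (w k (Suc i) - w k i))"
  proof -
    have "N = Suc (N - 1)" using N(3) by simp
    then have "(\<Sum>n=k+1..N. (w k n - w k (n - 1))) = (\<Sum>n=Suc k..Suc (N - 1). (w k n - w k (n - 1)))"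
      by simp
    also have "\<dots> = (\<Sum>i=k..N-1. (w k (Suc i) - w k i))"
      by (simp only: sum.shift_bounds_cl_Suc_ivl) simp
    finally show ?thesis .
  qed
  also have "\<dots> = w k N - w k k"
    using sum_Suc_diff[of k "N - 1" "w k"] N(3) by simp
  finally have s3: "M p (k + 1) = (\<Sum>n=k+1..N. v k n) - 2 / of_nat k * (w k N - w k k)" .
  have vk: "v k k = (2 / of_nat k) * w k k"
  proof -
    define j where "j = k - 1"
    have j: "k = j + 1" using assms(1) unfolding j_def by simp
    have i: "k - 1 = j" "k - k = 0" "k + k - 1 = 2 * j + 1" "k + k = 2 * j + 1 + 1" using j by auto
    have f1: "fact (2 * j + 1 + 1) = (of_nat (2 * j + 1 + 1) :: rat) * fact (2 * j + 1)"
      using fact_Suc[of "2 * j + 1", where 'a=rat] by simp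
    have f2: "fact (j + 1) = (of_nat (j + 1) :: rat) * fact j"
      using fact_Suc[of "j", where 'a=rat] by simp
    have fk: "fact k = of_nat k * (fact j :: rat)" using f2 j by simp
    have kk: "k + k = Suc (2 * j + 1)" using j by simp
    have ofk: "(of_nat (Suc (2 * j + 1)) :: rat) = 2 * of_nat k" using j by simp
    have f2k: "fact (k + k) = (2 * of_nat k) * (fact (2 * j + 1) :: rat)"
      unfolding kk fact_Suc ofk ..
    have V: "v k k = fact j ^ 2 / fact (2 * j + 1)" unfolding v_def i by simp
    have W: "w k k = (of_nat k * fact j) ^ 2 / ((2 * of_nat k) * fact (2 * j + 1))"
      unfolding w_def f2k by (simp add: fk)
    have k0: "(of_nat k :: rat) \<noteq> 0" using assms(1) by simp
    show ?thesis unfolding V W by (rule vk_alg[OF k0])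
  qed
  have "p - k - 1 = N" "p - k = Suc N" using N_def N(1) by auto
  then show ?thesis using s1 s3 vk by (simp only:) (simp add: algebra_simps)
qed

lemma rc_pmult: assumes "prime p" "pint p z" "x - y = of_nat p * z" shows "rc p x y"
  unfolding rc_def using assms prime_gt_0_nat[OF assms(1)] by simp

lemma delta_alg: fixes F G G' P K Q :: rat
  assumes "K \<noteq> 0" "G' \<noteq> 0" "P \<noteq> 0" "Q \<noteq> 0" "G = Q * G'"
  shows "- (2 / K) * (F ^ 2 / (G' * P)) - F ^ 2 / (G * P) = (- (F ^ 2) * (2 * Q + K)) / (K * G * P)"
  using assms by (simp add: field_simps)

lemma delta_cong: assumes "prime p" "1 \<le> k" "2 * k + 2 \<le> p"
  shows "rc p (- (2 / of_nat k) * w k (p - k - 1) - v k (p - k)) (- 3 * fact (2 * k - 1) / fact k ^ 2)"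
proof -
  have pr: "prime p" by fact
  define F where "F = (fact (p - k - 1) :: rat)"
  define G where "G = (fact (p - k - k) :: rat)"
  define G' where "G' = (fact (p - k - 1 - k) :: rat)"
  define P where "P = (fact (p - 1) :: rat)"
  define Q where "Q = (of_nat p - 2 * of_nat k :: rat)"
  define K where "K = (of_nat k :: rat)"
  have i: "p - k - 1 + k = p - 1" "p - k + k - 1 = p - 1" using assms by auto
  have wexp: "w k (p - k - 1) = F ^ 2 / (G' * P)"
    unfolding w_def F_def G'_def P_def i by simp
  have vexp: "v k (p - k) = F ^ 2 / (G * P)"
    unfolding v_def F_def G_def P_def i by simp
  have kk: "p - k - k = Suc (p - k - 1 - k)" using assms by auto
  have ofq: "(of_nat (Suc (p - k - 1 - k)) :: rat) = Q" unfolding Q_def using assms by (simp add: of_nat_diff)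
  have GG: "G = Q * G'" unfolding G_def G'_def kk fact_Suc ofq ..
  have nz: "K \<noteq> 0" "G' \<noteq> 0" "P \<noteq> 0" "Q \<noteq> 0" "G \<noteq> 0"
    unfolding K_def G'_def P_def Q_def G_def using assms by auto
  define A where "A = - (F ^ 2) * (2 * Q + K)"
  define B where "B = K * G * P"
  define C where "C = (- 3 * fact (2 * k - 1) :: rat)"
  define D where "D = (fact k ^ 2 :: rat)"
  have exact: "- (2 / of_nat k) * w k (p - k - 1) - v k (p - k) = A / B"
    unfolding wexp vexp A_def B_def K_def[symmetric] by (rule delta_alg[OF nz(1-4) GG])
  have W1: "rc p ((F * fact k) ^ 2) 1"
  proof -
    have "p - 1 - k = p - k - 1" by simp
    then show ?thesis using wilson_sq[OF pr, of k] assms unfolding F_def by simp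
  qed
  have W2: "rc p (G * fact (2 * k - 1)) 1"
  proof -
    have e: "p - 1 - (2 * k - 1) = p - k - k" using assms by simp
    have "rc p (fact (p - 1 - (2 * k - 1)) * fact (2 * k - 1)) ((-1) ^ (2 * k - 1 + 1))"
      by (rule wilson_gen[OF pr]) (use assms in simp)
    moreover have "2 * k - 1 + 1 = 2 * k" using assms by simp
    ultimately show ?thesis unfolding G_def e by (simp add: power_mult)
  qed
  have W3: "rc p P (-1)"
    using wilson_gen[OF pr, of 0] unfolding P_def by simp
  have AD1: "rc p (A * D) (- (2 * Q + K) * 1)"
  proof -
    have "A * D = - (2 * Q + K) * (F * fact k) ^ 2" unfolding A_def D_def by (simp add: power_mult_distrib algebra_simps)
    moreover have "pint p (- (2 * Q + K))"
      unfolding Q_def K_def by (intro pint_uminus[OF pr] pint_add[OF pr] pint_mult[OF pr] pint_diff[OF pr] pint_nat[OF pr])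
        (use pint_nat[OF pr, of 2] in simp)+
    ultimately show ?thesis using rc_mult_left[OF pr _ W1] by simp
  qed
  have AD2: "rc p (- (2 * Q + K) * 1) (3 * K)"
    by (rule rc_pmult[OF pr, of "-2"]) (auto simp: Q_def K_def algebra_simps intro: pint_int[OF pr, of "-2", simplified])
  have CB1: "rc p (G * fact (2 * k - 1) * P) (1 * (-1))"
    by (rule rc_mult[OF pr W2 W3]) (auto intro: pint_mult[OF pr] pint_fact[OF pr] simp: G_def pint_int[OF pr, of "-1", simplified])
  have CB2: "rc p (C * B) (3 * K)"
  proof -
    have "C * B = (- 3 * K) * (G * fact (2 * k - 1) * P)" unfolding C_def B_def by (simp add: mult_ac)
    moreover have "pint p (- 3 * K)" unfolding K_def
      using pint_int[OF pr, of "- 3 * int k"] by simp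
    ultimately show ?thesis using rc_mult_left[OF pr _ CB1, of "- 3 * K"] by simp
  qed
  have ADCB: "rc p (A * D) (C * B)"
    using rc_trans[OF pr rc_trans[OF pr AD1 AD2] rc_sym[OF pr CB2]] .
  have "rc p (A / B) (C / D)"
  proof (rule rc_frac[OF pr ADCB])
    have "k < p" using assms by simp
    have "pint p (1 / K)" unfolding K_def by (rule pint_inv_small) (use assms in auto)
    moreover have "pint p (1 / G)" unfolding G_def by (rule pint_inv_fact[OF pr]) (use assms in simp)
    moreover have "pint p (1 / P)" unfolding P_def by (rule pint_inv_fact[OF pr]) (use assms in simp)
    ultimately show "pint p (1 / B)" unfolding B_def using pint_mult[OF pr] by (metis (no_types) mult_1 times_divide_times_eq)
    show "pint p (1 / D)" unfolding D_def power2_eq_square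
      using pint_mult[OF pr pint_inv_fact[OF pr] pint_inv_fact[OF pr], of k k] assms by simp
    show "B \<noteq> 0" unfolding B_def using nz by simp
    show "D \<noteq> 0" unfolding D_def by simp
  qed
  then show ?thesis unfolding exact C_def D_def by simp
qed

lemma M1_cong: assumes "prime p" "2 < p" shows "rc p (M p 1) 0"
proof -
  have pr: "prime p" by fact
  have v1: "v 1 n = 1 / of_nat n" if "1 \<le> n" for n
  proof -
    have "fact n = (of_nat n :: rat) * fact (n - 1)" using that
      by (metis Suc_diff_1 fact_Suc le_eq_less_or_eq less_one not_less_eq_eq zero_less_iff_neq_zero)
    then show ?thesis unfolding v_def using that by (simp add: power2_eq_square)
  qed
  define H where "H = (\<Sum>n=1..p-1. 1 / (of_nat n :: rat))"
  have MH: "M p 1 = H" unfolding M_def H_def by (intro sum.cong refl v1) auto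
  have Hrev: "H = (\<Sum>n=1..p-1. 1 / (of_nat (p - n) :: rat))"
    unfolding H_def by (subst sum.atLeastAtMost_rev) (use assms in \<open>simp add: prime_gt_0_nat\<close>)
  have "2 * H = (\<Sum>n=1..p-1. 1 / (of_nat n :: rat) + 1 / of_nat (p - n))"
    unfolding sum.distrib proof -
    have "2 * H = H + H" by simp
    also have "\<dots> = (\<Sum>n=1..p-1. 1 / (of_nat n :: rat)) + (\<Sum>n=1..p-1. 1 / (of_nat (p - n) :: rat))"
      using H_def Hrev by simp
    finally show "2 * H = (\<Sum>n=1..p-1. 1 / (of_nat n :: rat)) + (\<Sum>n=1..p-1. 1 / (of_nat (p - n) :: rat))" .
  qed
  also have "\<dots> = (\<Sum>n=1..p-1. of_nat p * (1 / of_nat n * (1 / of_nat (p - n))))"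
  proof (rule sum.cong)
    fix n assume n: "n \<in> {1..p-1}"
    have "n \<le> p" using n by auto
    then have "(of_nat (p - n) :: rat) = of_nat p - of_nat n" by (simp add: of_nat_diff)
    moreover have "(of_nat n :: rat) \<noteq> 0" "(of_nat p :: rat) - of_nat n \<noteq> 0" using n by auto
    ultimately show "1 / (of_nat n :: rat) + 1 / of_nat (p - n) = of_nat p * (1 / of_nat n * (1 / of_nat (p - n)))"
      by (simp add: field_simps)
  qed simp
  also have "\<dots> = of_nat p * (\<Sum>n=1..p-1. 1 / of_nat n * (1 / of_nat (p - n)))"
    by (simp add: sum_distrib_left)
  finally have H2: "2 * H = of_nat p * (\<Sum>n=1..p-1. 1 / of_nat n * (1 / of_nat (p - n)))" .
  have "pint p (\<Sum>n=1..p-1. 1 / of_nat n * (1 / of_nat (p - n)))"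
    by (rule pint_sum[OF pr], rule pint_mult[OF pr]) (auto intro!: pint_inv_small)
  then have "rc p (2 * H) (2 * 0)" unfolding H2 using rc_p[OF pr] by simp
  then have "rc p H 0" by (rule rc_cancel[OF pr]) (use pint_inv_small[of 2 p] assms in auto)
  then show ?thesis unfolding MH .
qed

definition ff :: "nat \<Rightarrow> rat" where "ff j = fact (2 * j - 1) / fact j ^ 2"

lemma M_cong: assumes "prime p" "2 < p" "1 \<le> k" "2 * k + 1 \<le> p"
  shows "rc p (M p k) (- (\<Sum>j\<in>{1..<k}. 3 * ff j))"
  using assms(3,4)
proof (induction k rule: nat_induct_at_least)
  case base
  then show ?case using M1_cong[OF assms(1,2)] by simp
next
  case (Suc n)
  have pr: "prime p" by fact
  have IH: "rc p (M p n) (- (\<Sum>j\<in>{1..<n}. 3 * ff j))" using Suc by simp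
  have st: "M p (n + 1) = M p n + (- (2 / of_nat n) * w n (p - n - 1) - v n (p - n))"
    using M_step[of n p] Suc by simp
  have D: "rc p (- (2 / of_nat n) * w n (p - n - 1) - v n (p - n)) (- 3 * ff n)"
    using delta_cong[OF pr, of n] Suc unfolding ff_def by simp
  have "rc p (M p (n + 1)) (- (\<Sum>j\<in>{1..<n}. 3 * ff j) + - 3 * ff n)"
    unfolding st by (rule rc_add[OF pr IH D])
  moreover have "(\<Sum>j\<in>{1..<Suc n}. 3 * ff j) = (\<Sum>j\<in>{1..<n}. 3 * ff j) + 3 * ff n"
    using Suc by simp
  ultimately show ?case by simp
qed

lemma te_alg: fixes a b c d K :: rat assumes "b \<noteq> 0" "c \<noteq> 0" "d \<noteq> 0"
  shows "a / (b * c) / (b / (K * c * d)) = K * (a * d / b ^ 2)"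
  using assms by (simp add: field_simps power2_eq_square)

lemma term_eq: assumes "1 \<le> k" "k \<le> m"
  shows "((- of_nat k :: rat) gchoose m) * (-1) ^ m / of_nat (m choose k) = of_nat k * u k m"
proof -
  have "((- of_nat k :: rat) gchoose m) * (-1) ^ m = ((of_nat k + of_nat m - 1) gchoose m) * ((-1) ^ m * (-1) ^ m)"
    by (simp add: gbinomial_minus)
  also have "\<dots> = (of_nat (k + m - 1) gchoose m)" using assms by (simp add: of_nat_diff flip: power_mult_distrib)
  also have "\<dots> = of_nat ((k + m - 1) choose m)" by (simp add: binomial_gbinomial)
  also have "\<dots> = fact (k + m - 1) / (fact m * fact (k - 1))"
    using binomial_fact[of m "k + m - 1", where 'a=rat] assms by (simp add: add.commute)
  finally have e1: "((- of_nat k :: rat) gchoose m) * (-1) ^ m = fact (k + m - 1) / (fact m * fact (k - 1))" .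
  have e2: "(of_nat (m choose k) :: rat) = fact m / (fact k * fact (m - k))"
    using binomial_fact[OF assms(2)] by simp
  have kk: "k = Suc (k - 1)" using assms(1) by simp
  have e3: "(fact k :: rat) = of_nat k * fact (k - 1)"
    by (subst kk, subst fact_Suc, subst kk[symmetric], rule refl)
  have e4: "m + k - 1 = k + m - 1" by simp
  show ?thesis unfolding e1 e2 u_def e3 e4 by (rule te_alg) auto
qed

lemma binom_ff: assumes "1 \<le> j" shows "(of_nat ((2 * j) choose j) :: rat) / of_nat j = 2 * ff j"
proof -
  have jj: "2 * j = Suc (2 * j - 1)" using assms by simp
  have f: "(fact (2 * j) :: rat) = (2 * of_nat j) * fact (2 * j - 1)"
    by (subst jj, subst fact_Suc, subst jj[symmetric]) simp
  have "(of_nat ((2 * j) choose j) :: rat) = fact (2 * j) / (fact j * fact j)"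
    using binomial_fact[of j "2 * j", where 'a=rat] by (simp add: mult_2)
  then show ?thesis unfolding ff_def f using assms by (simp add: field_simps power2_eq_square)
qed

theorem lemma2p4:
  fixes p k :: nat
  assumes "prime p" and "p > 3" and "1 \<le> k" and "k \<le> (p - 1) div 2"
  shows "rat_cong
    (\<Sum>j=0..p - 2*k. ((- of_nat k :: rat) gchoose (k + j)) * (-1) ^ (k + j)
                        / of_nat ((k + j) choose k))
    (3 * of_nat k / 2 * (\<Sum>j=1..k. of_nat ((2*j) choose j) / of_nat j)
       - 3 / 2 * of_nat ((2*k) choose k))
    p"
proof -
  have pr: "prime p" by fact
  have k2: "2 * k + 1 \<le> p" using assms(2,4) by presburger
  have L1: "(\<Sum>j=0..p - 2*k. ((- of_nat k :: rat) gchoose (k + j)) * (-1) ^ (k + j)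
                        / of_nat ((k + j) choose k)) = (\<Sum>j=0..p - 2*k. of_nat k * u k (j + k))"
    by (rule sum.cong) (use term_eq[OF assms(3)] in \<open>auto simp: add.commute\<close>)
  also have "\<dots> = (\<Sum>n=k..p-k. of_nat k * u k n)"
  proof -
    have "p - 2 * k + k = p - k" using k2 by simp
    then show ?thesis using sum.shift_bounds_cl_nat_ivl[of "\<lambda>n. of_nat k * u k n" 0 k "p - 2 * k"] by simp
  qed
  also have "\<dots> = of_nat k * (\<Sum>n=k..p-k. u k (p - n))"
  proof -
    have "(\<Sum>n=k..p-k. u k n) = (\<Sum>n=k..p-k. u k (p - k + k - n))" by (rule sum.atLeastAtMost_rev)
    also have "p - k + k = p" using k2 by simp
    finally have "(\<Sum>n=k..p-k. u k n) = (\<Sum>n=k..p-k. u k (p - n))" .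
    then show ?thesis by (simp add: sum_distrib_left[symmetric])
  qed
  finally have L: "(\<Sum>j=0..p - 2*k. ((- of_nat k :: rat) gchoose (k + j)) * (-1) ^ (k + j)
                        / of_nat ((k + j) choose k)) = of_nat k * (\<Sum>n=k..p-k. u k (p - n))" .
  have R1: "rc p (\<Sum>n=k..p-k. u k (p - n)) (\<Sum>n=k..p-k. - v k n)"
    by (rule rc_sum[OF pr], rule reflect[OF pr assms(3)]) auto
  have R2: "(\<Sum>n=k..p-k. - v k n) = - M p k" unfolding M_def by (simp add: sum_negf)
  have R3: "rc p (- M p k) (\<Sum>j\<in>{1..<k}. 3 * ff j)"
    using rc_neg[OF pr M_cong[OF pr _ assms(3) k2]] assms(2) by simp
  have R: "rc p (\<Sum>n=k..p-k. u k (p - n)) (\<Sum>j\<in>{1..<k}. 3 * ff j)"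
    using rc_trans[OF pr R1[unfolded R2] R3] .
  have RK: "rc p (of_nat k * (\<Sum>n=k..p-k. u k (p - n))) (of_nat k * (\<Sum>j\<in>{1..<k}. 3 * ff j))"
    by (rule rc_mult_left[OF pr pint_nat[OF pr] R])
  have RHS: "3 * of_nat k / 2 * (\<Sum>j=1..k. of_nat ((2*j) choose j) / of_nat j)
       - 3 / 2 * of_nat ((2*k) choose k) = of_nat k * (\<Sum>j\<in>{1..<k}. 3 * ff j)"
  proof -
    have "(\<Sum>j=1..k. (of_nat ((2*j) choose j) :: rat) / of_nat j) = (\<Sum>j=1..k. 2 * ff j)"
      by (rule sum.cong) (auto simp: binom_ff)
    also have "\<dots> = (\<Sum>j\<in>{1..<k}. 2 * ff j) + 2 * ff k"
      using assms(3) by (simp add: sum.last_plus)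
    finally have s: "(\<Sum>j=1..k. (of_nat ((2*j) choose j) :: rat) / of_nat j) = (\<Sum>j\<in>{1..<k}. 2 * ff j) + 2 * ff k" .
    have c: "(of_nat ((2*k) choose k) :: rat) = of_nat k * (2 * ff k)"
      using binom_ff[OF assms(3)] assms(3) by (simp add: field_simps)
    have d2: "(\<Sum>j\<in>{1..<k}. 2 * ff j) = 2 * (\<Sum>j\<in>{1..<k}. ff j)" by (simp add: sum_distrib_left)
    have d3: "(\<Sum>j\<in>{1..<k}. 3 * ff j) = 3 * (\<Sum>j\<in>{1..<k}. ff j)" by (simp add: sum_distrib_left)
    show ?thesis unfolding s c d2 d3 by (simp add: algebra_simps)
  qed
  show ?thesis unfolding rat_cong_rc[OF pr] L RHS using RK .
qed

end
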